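(* Let $p \geq 2$ be a real number (the computational budget). Let $c_{a,1}>0$ and $c_{c,1}>0$ be constants, let $r_{a,1}:(0,\infty)\to(0,\infty)$ be a positive, decreasing, at least twice continuously differentiable function, and let $r_{c,1}:(0,\infty)\to(0,\infty)$ be a positive, increasing, at least twice continuously differentiable function. Define $$u_1:[1,p-1]\to(0,\infty),\qquad u_1(n_1)=\frac{1}{p-n_1}\Big(c_{a,1}\,r_{a,1}(n_1)+c_{c,1}\,r_{c,1}(n_1)\Big).$$ Assume that $$c_{a,1}\,r_{a,1}''(n_1)+c_{c,1}\,r_{c,1}''(n_1)>0 \quad\text{for all } n_1\in[1,p-1].$$ Then $u_1$ has a unique global minimum $n_1^*\in[1,p-1]$.
   Context: The functions $r_{a,1}$ and $r_{c,1}$ model, respectively, an accuracy rate and an evaluation-cost rate of a low-fidelity model trained with $n_1$ high-fidelity samples: for a high-fidelity model output with Pearson correlation $\rho_1(n_1)$ to the low-fidelity output and low-fidelity evaluation cost $w_1(n_1)$ (high-fidelity cost normalized to $1$), one has $1-\rho_1^2(n_1)\le c_{a,1}r_{a,1}(n_1)$ and $w_1(n_1)\le c_{c,1}r_{c,1}(n_1)$. These bounds are not needed for the statement, which concerns only $u_1$. *)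

theory Defs
  imports "HOL-Analysis.Analysis"
begin

definition u1 :: "real \<Rightarrow> real \<Rightarrow> real \<Rightarrow> (real \<Rightarrow> real) \<Rightarrow> (real \<Rightarrow> real) \<Rightarrow> real \<Rightarrow> real" where
  "u1 p ca cc ra rc n = (ca * ra n + cc * rc n) / (p - n)"

end

theory Submission
  imports Defs
begin

theorem proposition1:
  fixes p ca cc :: real
    and ra ra' ra'' rc rc' rc'' :: "real \<Rightarrow> real"
  assumes hp: "p \<ge> 2"
    and hca: "ca > 0" and hcc: "cc > 0"
    and ra_pos: "\<And>x. x > 0 \<Longrightarrow> ra x > 0"
    and ra_dec: "\<And>x y. 0 < x \<Longrightarrow> x \<le> y \<Longrightarrow> ra y \<le> ra x"
    and ra_d1: "\<And>x. x > 0 \<Longrightarrow> (ra has_real_derivative ra' x) (at x)"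
    and ra_d2: "\<And>x. x > 0 \<Longrightarrow> (ra' has_real_derivative ra'' x) (at x)"
    and ra_c2: "continuous_on {0<..} ra''"
    and rc_pos: "\<And>x. x > 0 \<Longrightarrow> rc x > 0"
    and rc_inc: "\<And>x y. 0 < x \<Longrightarrow> x \<le> y \<Longrightarrow> rc x \<le> rc y"
    and rc_d1: "\<And>x. x > 0 \<Longrightarrow> (rc has_real_derivative rc' x) (at x)"
    and rc_d2: "\<And>x. x > 0 \<Longrightarrow> (rc' has_real_derivative rc'' x) (at x)"
    and rc_c2: "continuous_on {0<..} rc''"
    and convex: "\<And>n. n \<in> {1..p-1} \<Longrightarrow> ca * ra'' n + cc * rc'' n > 0"
  shows "\<exists>!n. n \<in> {1..p-1} \<and> (\<forall>m\<in>{1..p-1}. u1 p ca cc ra rc n \<le> u1 p ca cc ra rc m)"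
proof -
  define f where "f = (\<lambda>n. ca * ra n + cc * rc n)"
  define f' where "f' = (\<lambda>n. ca * ra' n + cc * rc' n)"
  define u where "u = u1 p ca cc ra rc"
  have u_eq: "\<And>n. u n = f n / (p - n)" unfolding u_def u1_def f_def by simp
  have fd: "\<And>x. x > 0 \<Longrightarrow> (f has_real_derivative f' x) (at x)"
    unfolding f_def f'_def by (auto intro!: derivative_eq_intros ra_d1 rc_d1)
  have fd2: "\<And>x. x > 0 \<Longrightarrow> (f' has_real_derivative (ca * ra'' x + cc * rc'' x)) (at x)"
    unfolding f'_def by (auto intro!: derivative_eq_intros ra_d2 rc_d2)
  have fpos: "\<And>x. x > 0 \<Longrightarrow> f x > 0" unfolding f_def
    using ra_pos rc_pos hca hcc by (simp add: add_pos_pos)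
  have f'mono: "f' a < f' b" if "1 \<le> a" "a < b" "b \<le> p - 1" for a b
    using that
    by (intro DERIV_pos_imp_increasing[of a b f']) (auto intro!: fd2 convex exI)
  have strict: "f ((a+b)/2) < (f a + f b)/2" if H: "1 \<le> a" "a < b" "b \<le> p - 1" for a b
  proof -
    define m where "m = (a+b)/2"
    have am: "a < m" "m < b" using that by (auto simp: m_def)
    obtain z1 where z1: "a < z1" "z1 < m" "f m - f a = (m - a) * f' z1"
      using MVT2[of a m f f'] am H fd by auto
    obtain z2 where z2: "m < z2" "z2 < b" "f b - f m = (b - m) * f' z2"
      using MVT2[of m b f f'] am H fd by auto
    have "f' z1 < f' z2" using f'mono[of z1 z2] z1 z2 am H by auto
    moreover have "m - a = b - m" "m - a > 0" using am by (auto simp: m_def field_simps)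
    ultimately have "f m - f a < f b - f m" using z1 z2
      by (metis mult_strict_left_mono)
    then show ?thesis by (simp add: m_def[symmetric])
  qed
  have cont: "continuous_on {1..p-1} u"
  proof -
    have "continuous_on {1..p-1} f"
      by (rule continuous_at_imp_continuous_on) (auto intro!: DERIV_isCont fd)
    then show ?thesis unfolding u_eq[abs_def]
      by (auto intro!: continuous_intros)
  qed
  obtain n where n: "n \<in> {1..p-1}" "\<forall>m\<in>{1..p-1}. u n \<le> u m"
    using continuous_attains_inf[OF compact_Icc _ cont] hp by auto
  show ?thesis unfolding u_def[symmetric]
  proof (rule ex1I[of _ n])
    show "n \<in> {1..p-1} \<and> (\<forall>m\<in>{1..p-1}. u n \<le> u m)" using n by blast
  next
    fix k assume k: "k \<in> {1..p-1} \<and> (\<forall>m\<in>{1..p-1}. u k \<le> u m)"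
    show "k = n"
    proof (rule ccontr)
      assume ne: "k \<noteq> n"
      define a where "a = min k n"
      define b where "b = max k n"
      have ab: "1 \<le> a" "a < b" "b \<le> p - 1" using k n ne by (auto simp: a_def b_def)
      have ua: "u a = u n" and ub: "u b = u n" using k n
        by (auto simp: a_def b_def min_def max_def intro: order.antisym)
      define t where "t = u n"
      have pa: "p - a > 0" "p - b > 0" using ab by auto
      have fa: "f a = t * (p - a)" using ua pa by (simp add: u_eq t_def field_simps)
      have fb: "f b = t * (p - b)" using ub pa by (simp add: u_eq t_def field_simps)
      define m where "m = (a+b)/2"
      have mI: "m \<in> {1..p-1}" using ab by (auto simp: m_def)
      have pm: "p - m > 0" using mI by auto
      have "t \<le> u m" using n mI by (simp add: t_def)
      hence "t * (p - m) \<le> f m" using pm by (simp add: u_eq field_simps)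
      moreover have "f m < (f a + f b)/2" using strict[OF ab] by (simp add: m_def)
      moreover have "(f a + f b)/2 = t * (p - m)" by (simp add: fa fb m_def field_simps)
      ultimately show False by linarith
    qed
  qed
qed

end
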